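(* Let $G = K \rtimes_\varphi \langle t\rangle$ be a finitely generated group, where $K$ is abelian, $\langle t\rangle$ is infinite cyclic and $\varphi\in\mathrm{Aut}(K)$. Let $R$ be a finite symmetric subset of $K$ such that $S=R\cup\{t^{\pm1}\}$ generates $G$. Then for every $g=(x,t^m)\in G$ with $m\ge0$ there is a word $w\in W'$ that is a geodesic and represents $g$.
   Context: $K$ is written additively and elements of $G$ are pairs $(x,t^m)$ with $(x,t^m)(x',t^{m'})=(x+\varphi^m(x'),t^{m+m'})$; $m$ is the $t$-exponent sum of $(x,t^m)$. $W(R)$ denotes the set of words in the alphabet $R$. The length of a word is the length of its free reduction; a word is a geodesic if its length equals the word length (w.r.t. $S$) of the element it represents. $W'$ is the set of geodesic words of the form $t^{-p}u_0\,t\,u_1\,t\cdots u_{d-1}\,t\,u_d\,t^{-q}t^{m}$ with integers $p,q,m\ge0$, $d=p+q$ and $u_0,\dots,u_d\in W(R)$. *)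

theory Defs
  imports Main
begin

text \<open>Elements of G = K \<rtimes>_phi <t> are pairs (x, m) with x in K and m the t-exponent.\<close>

definition phi_pow :: "('k \<Rightarrow> 'k) \<Rightarrow> int \<Rightarrow> 'k \<Rightarrow> 'k" where
  "phi_pow phi m = (if 0 \<le> m then phi ^^ nat m else (inv phi) ^^ nat (- m))"

definition gmult :: "('k::ab_group_add \<Rightarrow> 'k) \<Rightarrow> 'k \<times> int \<Rightarrow> 'k \<times> int \<Rightarrow> 'k \<times> int" where
  "gmult phi g h = (fst g + phi_pow phi (snd g) (fst h), snd g + snd h)"

definition ginv :: "('k::ab_group_add \<Rightarrow> 'k) \<Rightarrow> 'k \<times> int \<Rightarrow> 'k \<times> int" where
  "ginv phi g = (- phi_pow phi (- snd g) (fst g), - snd g)"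

definition gone :: "'k::ab_group_add \<times> int" where
  "gone = (0, 0)"

inductive_set gen_subgroup :: "('k::ab_group_add \<Rightarrow> 'k) \<Rightarrow> ('k \<times> int) set \<Rightarrow> ('k \<times> int) set"
  for phi A where
  gen_one: "gone \<in> gen_subgroup phi A"
| gen_base: "a \<in> A \<Longrightarrow> a \<in> gen_subgroup phi A"
| gen_mult: "a \<in> gen_subgroup phi A \<Longrightarrow> b \<in> gen_subgroup phi A \<Longrightarrow> gmult phi a b \<in> gen_subgroup phi A"
| gen_inv: "a \<in> gen_subgroup phi A \<Longrightarrow> ginv phi a \<in> gen_subgroup phi A"

datatype 'k letter = Gen 'k | Tp | Tm

fun letter_val :: "'k::ab_group_add letter \<Rightarrow> 'k \<times> int" where
  "letter_val (Gen r) = (r, 0)"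
| "letter_val Tp = (0, 1)"
| "letter_val Tm = (0, -1)"

fun inv_letter :: "'k::ab_group_add letter \<Rightarrow> 'k letter" where
  "inv_letter (Gen r) = Gen (- r)"
| "inv_letter Tp = Tm"
| "inv_letter Tm = Tp"

definition letters :: "'k set \<Rightarrow> 'k letter set" where
  "letters R = Gen ` R \<union> {Tp, Tm}"

definition eval_word :: "('k::ab_group_add \<Rightarrow> 'k) \<Rightarrow> 'k letter list \<Rightarrow> 'k \<times> int" where
  "eval_word phi w = foldr (\<lambda>a acc. gmult phi (letter_val a) acc) w gone"

definition red_step :: "('k::ab_group_add letter list \<times> 'k letter list) set" where
  "red_step = {(u @ [a, inv_letter a] @ v, u @ v) | u a v. True}"

definition freely_reduced :: "'k::ab_group_add letter list \<Rightarrow> bool" where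
  "freely_reduced w = (\<nexists>w'. (w, w') \<in> red_step)"

definition red_length :: "'k::ab_group_add letter list \<Rightarrow> nat" where
  "red_length w = (LEAST n. \<exists>w'. (w, w') \<in> red_step\<^sup>* \<and> freely_reduced w' \<and> length w' = n)"

definition word_length :: "('k::ab_group_add \<Rightarrow> 'k) \<Rightarrow> 'k set \<Rightarrow> 'k \<times> int \<Rightarrow> nat" where
  "word_length phi R g = (LEAST n. \<exists>w. set w \<subseteq> letters R \<and> length w = n \<and> eval_word phi w = g)"

definition geodesic :: "('k::ab_group_add \<Rightarrow> 'k) \<Rightarrow> 'k set \<Rightarrow> 'k letter list \<Rightarrow> bool" where
  "geodesic phi R w = (set w \<subseteq> letters R \<and> red_length w = word_length phi R (eval_word phi w))"

definition W_form :: "'k set \<Rightarrow> 'k letter list \<Rightarrow> bool" where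
  "W_form R w = (\<exists>p q m u0 us. length us = p + q \<and> (\<forall>u \<in> set (u0 # us). set u \<subseteq> Gen ` R) \<and>
      w = replicate p Tm @ u0 @ concat (map (\<lambda>u. Tp # u) us) @ replicate q Tm @ replicate m Tp)"

definition W' :: "('k::ab_group_add \<Rightarrow> 'k) \<Rightarrow> 'k set \<Rightarrow> 'k letter list set" where
  "W' phi R = {w. W_form R w \<and> geodesic phi R w}"

end

theory Submission
  imports Defs
begin


lemma funpow_additive:
  fixes f :: "'k::ab_group_add \<Rightarrow> 'k"
  assumes "\<And>a b. f (a+b) = f a + f b"
  shows "(f^^n) (a+b) = (f^^n) a + (f^^n) b"
  by (induction n) (simp_all add: assms)

locale ctx =
  fixes phi :: "'k::ab_group_add \<Rightarrow> 'k"
  assumes bij: "bij phi" and add: "\<And>a b. phi (a+b) = phi a + phi b"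
begin

lemma inv1: "phi (inv phi x) = x"
  by (meson bij bij_inv_eq_iff)
lemma inv2: "inv phi (phi x) = x"
  by (simp add: bij_is_inj[OF bij])
lemma inv_add: "inv phi (a+b) = inv phi a + inv phi b"
proof -
  have "phi (inv phi (a+b)) = phi (inv phi a + inv phi b)" by (simp add: add inv1)
  thus ?thesis using bij by (meson bij_is_inj injD)
qed

lemma pp_add: "phi_pow phi k (a+b) = phi_pow phi k a + phi_pow phi k b"
  unfolding phi_pow_def using funpow_additive[of phi] funpow_additive[of "inv phi"] add inv_add
  by auto

lemma pp_zero[simp]: "phi_pow phi k 0 = 0"
  using pp_add[of k 0 0] by simp

lemma pp_minus: "phi_pow phi k (-a) = - phi_pow phi k a"
proof -
  have "phi_pow phi k a + phi_pow phi k (-a) = 0" using pp_add[of k a "-a"] by simp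
  thus ?thesis by (metis add.inverse_unique)
qed

lemma pp0[simp]: "phi_pow phi 0 x = x"
  by (simp add: phi_pow_def)

lemma pp_up: "phi_pow phi (a+1) x = phi (phi_pow phi a x)"
proof (cases "0 \<le> a")
  case True
  hence "nat (a+1) = Suc (nat a)" by simp
  thus ?thesis using True by (simp add: phi_pow_def)
next
  case False
  define k where "k = nat (-(a+1))"
  have e: "nat (-a) = Suc k" using False k_def by simp
  have "phi_pow phi (a+1) = (inv phi)^^k" unfolding phi_pow_def k_def using False
    by (cases "a = -1") auto
  moreover have "phi_pow phi a x = inv phi (((inv phi)^^k) x)" unfolding phi_pow_def using e False by simp
  ultimately show ?thesis by (simp add: inv1)
qed

lemma pp_down: "phi_pow phi (a-1) x = inv phi (phi_pow phi a x)"
proof (cases "0 < a")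
  case True
  define k where "k = nat (a-1)"
  have e: "nat a = Suc k" using True k_def by simp
  have "phi_pow phi (a-1) = phi^^k" unfolding phi_pow_def k_def using True by simp
  moreover have "phi_pow phi a x = phi ((phi^^k) x)" unfolding phi_pow_def using e True by simp
  ultimately show ?thesis by (simp add: inv2)
next
  case False
  have e: "nat (-(a-1)) = Suc (nat (-a))" using False by simp
  have "phi_pow phi a = (inv phi)^^(nat (-a))" unfolding phi_pow_def using False
    by (cases "a = 0") auto
  thus ?thesis unfolding phi_pow_def using e False by simp
qed

lemma pp_comp: "phi_pow phi (a+b) x = phi_pow phi a (phi_pow phi b x)"
proof (induction a rule: int_induct[where k=0])
  case base
  then show ?case by simp
next
  case (step1 i)
  have "phi_pow phi (i + 1 + b) x = phi (phi_pow phi (i+b) x)"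
    using pp_up[of "i+b" x] by (simp add: ac_simps)
  then show ?case using step1 pp_up by simp
next
  case (step2 i)
  have "phi_pow phi (i - 1 + b) x = inv phi (phi_pow phi (i+b) x)"
    using pp_down[of "i+b" x] by (simp add: algebra_simps)
  then show ?case using step2 pp_down by simp
qed

lemma pp_sum_list: "phi_pow phi k (sum_list xs) = sum_list (map (phi_pow phi k) xs)"
  by (induction xs) (simp_all add: pp_add)

lemma gmult_assoc: "gmult phi g (gmult phi h k) = gmult phi (gmult phi g h) k"
  by (simp add: gmult_def pp_add pp_comp add.assoc)

lemma gmult_one_left[simp]: "gmult phi gone g = g"
  by (simp add: gmult_def gone_def)
lemma gmult_one_right[simp]: "gmult phi g gone = g"
  by (simp add: gmult_def gone_def)

lemma ginv_gmult: "ginv phi (gmult phi g h) = gmult phi (ginv phi h) (ginv phi g)"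
proof -
  obtain a s where g: "g = (a,s)" by fastforce
  obtain b t where h: "h = (b,t)" by fastforce
  have e: "- s - t = (-t) + (-s)" by simp
  have 1: "phi_pow phi (- s - t) a = phi_pow phi (-t) (phi_pow phi (-s) a)"
    by (simp only: e pp_comp)
  have e2: "- s - t + s = -t" by simp
  have 2: "phi_pow phi (- s - t) (phi_pow phi s b) = phi_pow phi (-t) b"
    using pp_comp[of "-s-t" s b, symmetric] by (simp only: e2)
  show ?thesis unfolding g h gmult_def ginv_def
    by (simp add: pp_add pp_minus 1 2)
qed

lemma ginv_one[simp]: "ginv phi gone = gone"
  by (simp add: ginv_def gone_def)

lemma eval_nil[simp]: "eval_word phi [] = gone"
  by (simp add: eval_word_def)
lemma eval_cons: "eval_word phi (a # w) = gmult phi (letter_val a) (eval_word phi w)"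
  by (simp add: eval_word_def)
lemma eval_single: "eval_word phi [a] = letter_val a"
  by (simp add: eval_cons)
lemma eval_append: "eval_word phi (xs @ ys) = gmult phi (eval_word phi xs) (eval_word phi ys)"
  by (induction xs) (simp_all add: eval_cons gmult_assoc)

lemma ginv_letter: "ginv phi (letter_val a) = letter_val (inv_letter a)"
  by (cases a) (simp_all add: ginv_def)

lemma eval_inv: "eval_word phi (rev (map inv_letter w)) = ginv phi (eval_word phi w)"
  by (induction w) (simp_all add: eval_append eval_single eval_cons ginv_gmult ginv_letter)

lemma gen_words:
  assumes "a \<in> gen_subgroup phi (letter_val ` letters R)" "\<And>r. r\<in>R \<Longrightarrow> -r \<in> R"
  shows "\<exists>w. set w \<subseteq> letters R \<and> eval_word phi w = a"
  using assms(1)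
proof induct
  case gen_one
  show ?case by (rule exI[of _ "[]"]) simp
next
  case (gen_base a)
  then obtain l where "l \<in> letters R" "a = letter_val l" by auto
  thus ?case by (intro exI[of _ "[l]"]) (simp add: eval_single)
next
  case (gen_mult a b)
  then obtain u v where "set u \<subseteq> letters R" "eval_word phi u = a" "set v \<subseteq> letters R" "eval_word phi v = b"
    by blast
  thus ?case by (intro exI[of _ "u @ v"]) (simp add: eval_append)
next
  case (gen_inv a)
  then obtain u where u: "set u \<subseteq> letters R" "eval_word phi u = a" by blast
  have "\<forall>l\<in>set u. inv_letter l \<in> letters R"
  proof
    fix l assume "l \<in> set u"
    hence "l \<in> letters R" using u by blast
    thus "inv_letter l \<in> letters R" using assms(2) by (cases l) (auto simp: letters_def)
  qed
  thus ?case using u by (intro exI[of _ "rev (map inv_letter u)"]) (auto simp: eval_inv)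
qed

lemma eval_pair: "eval_word phi [a, inv_letter a] = gone"
  by (cases a) (simp_all add: eval_cons gmult_def gone_def pp_up[of 0, simplified] pp_down[of 0, simplified] inv1 inv2)

end


lemma red_stepE:
  assumes "(w, w') \<in> red_step"
  obtains u a v where "w = u @ [a, inv_letter a] @ v" "w' = u @ v"
  using assms unfolding red_step_def by blast

lemma red_stepI: "(u @ [a, inv_letter a] @ v, u @ v) \<in> red_step"
  unfolding red_step_def by blast

lemma red_len: "(w, w') \<in> red_step \<Longrightarrow> length w = length w' + 2"
  by (erule red_stepE) simp

lemma red_set: "(w, w') \<in> red_step \<Longrightarrow> set w' \<subseteq> set w"
  by (erule red_stepE) auto

lemma reds_len: "(w, w') \<in> red_step\<^sup>* \<Longrightarrow> length w' \<le> length w"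
  by (induction rule: rtrancl_induct) (auto dest: red_len)

lemma reds_set: "(w, w') \<in> red_step\<^sup>* \<Longrightarrow> set w' \<subseteq> set w"
  by (induction rule: rtrancl_induct) (auto dest: red_set)

lemma exists_reduced: "\<exists>w'. (w, w') \<in> red_step\<^sup>* \<and> freely_reduced w'"
proof (induction "length w" arbitrary: w rule: less_induct)
  case less
  show ?case
  proof (cases "freely_reduced w")
    case True thus ?thesis by blast
  next
    case False
    then obtain w1 where s: "(w, w1) \<in> red_step" unfolding freely_reduced_def by blast
    have "length w1 < length w" using red_len[OF s] by simp
    from less[OF this] obtain w' where "(w1, w') \<in> red_step\<^sup>*" "freely_reduced w'" by blast
    thus ?thesis using s by (meson converse_rtrancl_into_rtrancl)
  qed
qed

lemma red_length_ex:
  "\<exists>w'. (w, w') \<in> red_step\<^sup>* \<and> freely_reduced w' \<and> length w' = red_length w"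
proof -
  have "\<exists>n w'. (w, w') \<in> red_step\<^sup>* \<and> freely_reduced w' \<and> length w' = n"
    using exists_reduced by blast
  from LeastI_ex[OF this] show ?thesis unfolding red_length_def by blast
qed

lemma red_length_le:
  assumes "(w, w1) \<in> red_step\<^sup>*"
  shows "red_length w \<le> length w1"
proof -
  obtain w' where w': "(w1, w') \<in> red_step\<^sup>*" "freely_reduced w'" using exists_reduced by blast
  have "(w, w') \<in> red_step\<^sup>*" using assms w'(1) by simp
  hence "red_length w \<le> length w'" unfolding red_length_def using w'(2) by (intro Least_le) blast
  thus ?thesis using reds_len[OF w'(1)] by simp
qed

lemma red_ctx_step: "(x, y) \<in> red_step \<Longrightarrow> (u @ x @ v, u @ y @ v) \<in> red_step"
proof (erule red_stepE)
  fix a c b assume "x = a @ [c, inv_letter c] @ b" "y = a @ b"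
  thus ?thesis using red_stepI[of "u @ a" c "b @ v"] by simp
qed

lemma red_ctx: "(x, y) \<in> red_step\<^sup>* \<Longrightarrow> (u @ x @ v, u @ y @ v) \<in> red_step\<^sup>*"
proof (induction rule: rtrancl_induct)
  case base thus ?case by simp
next
  case (step y z) thus ?case by (meson red_ctx_step rtrancl.rtrancl_into_rtrancl)
qed

lemma cancel: "(replicate k Tm @ replicate k Tp, []) \<in> (red_step :: ('k::ab_group_add letter list \<times> _) set)\<^sup>*"
proof (induction k)
  case 0 thus ?case by simp
next
  case (Suc k)
  have e: "replicate (Suc k) Tm @ replicate (Suc k) Tp = replicate k Tm @ [Tm, inv_letter Tm] @ (replicate k Tp :: 'k letter list)"
    by (simp add: replicate_append_same[symmetric])
  show ?case unfolding e using red_stepI[of "replicate k Tm" Tm "replicate k Tp :: 'k letter list"] Suc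
    by (meson converse_rtrancl_into_rtrancl)
qed

fun ht :: "'k letter list \<Rightarrow> int" where
  "ht [] = 0" | "ht (Gen r # w) = ht w" | "ht (Tp # w) = ht w + 1" | "ht (Tm # w) = ht w - 1"
fun cg :: "'k letter list \<Rightarrow> nat" where
  "cg [] = 0" | "cg (Gen r # w) = Suc (cg w)" | "cg (Tp # w) = cg w" | "cg (Tm # w) = cg w"
fun cp :: "'k letter list \<Rightarrow> nat" where
  "cp [] = 0" | "cp (Gen r # w) = cp w" | "cp (Tp # w) = Suc (cp w)" | "cp (Tm # w) = cp w"
fun cm :: "'k letter list \<Rightarrow> nat" where
  "cm [] = 0" | "cm (Gen r # w) = cm w" | "cm (Tp # w) = cm w" | "cm (Tm # w) = Suc (cm w)"
fun rl :: "int \<Rightarrow> 'k letter list \<Rightarrow> (int \<times> 'k) list" where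
  "rl h [] = []" | "rl h (Gen r # w) = (h, r) # rl h w" | "rl h (Tp # w) = rl (h+1) w" | "rl h (Tm # w) = rl (h-1) w"

lemma ht_append[simp]: "ht (xs @ ys) = ht xs + ht ys"
  by (induction xs rule: ht.induct) auto
lemma cm_append[simp]: "cm (xs @ ys) = cm xs + cm ys"
  by (induction xs rule: ht.induct) auto
lemma rl_append: "rl h (xs @ ys) = rl h xs @ rl (h + ht xs) ys"
  by (induction h xs rule: rl.induct) (auto simp: algebra_simps)
lemma length_cnt: "length w = cg w + cp w + cm w"
  by (induction w rule: ht.induct) auto
lemma ht_cnt: "ht w = int (cp w) - int (cm w)"
  by (induction w rule: ht.induct) auto
lemma cm_ge: "- ht w \<le> int (cm w)"
  using ht_cnt[of w] by simp
lemma length_rl: "length (rl h w) = cg w"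
  by (induction h w rule: rl.induct) auto
lemma ht_rep_Tm[simp]: "ht (replicate k Tm) = - int k"
  by (induction k) auto
lemma ht_rep_Tp[simp]: "ht (replicate k Tp) = int k"
  by (induction k) auto
lemma rl_rep_Tm[simp]: "rl h (replicate k Tm) = []"
  by (induction k arbitrary: h) auto
lemma rl_rep_Tp[simp]: "rl h (replicate k Tp) = []"
  by (induction k arbitrary: h) auto
lemma ht_gens[simp]: "ht (map (Gen \<circ> f) xs) = 0"
  by (induction xs) auto
lemma rl_blk: "rl h (map (Gen \<circ> snd) (filter (\<lambda>x. fst x = h) L)) = filter (\<lambda>x. fst x = h) L"
  by (induction L) auto

lemma rl_set:
  "(h', r) \<in> set (rl h w) \<Longrightarrow> Gen r \<in> set w \<and> (\<exists>k\<le>length w. h' = h + ht (take k w))"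
proof (induction h w rule: rl.induct)
  case (1 h) thus ?case by simp
next
  case (2 h r' w)
  show ?case
  proof (cases "(h', r) = (h, r')")
    case True thus ?thesis by (intro conjI exI[of _ 0]) auto
  next
    case False
    hence "(h', r) \<in> set (rl h w)" using 2(2) by auto
    from 2(1)[OF this] obtain k where "Gen r \<in> set w" "k \<le> length w" "h' = h + ht (take k w)" by blast
    thus ?thesis by (intro conjI exI[of _ "Suc k"]) auto
  qed
next
  case (3 h w)
  from 3(1) 3(2) obtain k where "Gen r \<in> set w" "k \<le> length w" "h' = h + 1 + ht (take k w)" by auto
  thus ?case by (intro conjI exI[of _ "Suc k"]) auto
next
  case (4 h w)
  from 4(1) 4(2) obtain k where "Gen r \<in> set w" "k \<le> length w" "h' = h - 1 + ht (take k w)" by auto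
  thus ?case by (intro conjI exI[of _ "Suc k"]) auto
qed

lemma part_sum:
  fixes f :: "'a \<Rightarrow> 'b::comm_monoid_add" and N :: nat
  assumes "\<forall>x\<in>set L. k x < N \<and> (\<forall>j. P j x = (j = k x))"
  shows "sum_list (map f L) = (\<Sum>j<N. sum_list (map f (filter (P j) L)))"
  using assms
proof (induction L)
  case Nil thus ?case by simp
next
  case (Cons x L)
  have "(\<Sum>j<N. sum_list (map f (filter (P j) (x#L)))) =
        (\<Sum>j<N. (if j = k x then f x else 0) + sum_list (map f (filter (P j) L)))"
    using Cons.prems by (intro sum.cong) auto
  also have "\<dots> = (\<Sum>j<N. (if j = k x then f x else 0)) + (\<Sum>j<N. sum_list (map f (filter (P j) L)))"
    by (simp add: sum.distrib)
  also have "(\<Sum>j<N. (if j = k x then f x else 0)) = f x"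
    using Cons.prems by (subst sum.delta) auto
  finally show ?case using Cons by simp
qed

lemma sum_list_upt: "sum_list (map f [0..<n]) = (\<Sum>j<n. f j)"
  by (induction n) auto

lemma length_concat_Tp: "length (concat (map (\<lambda>u. Tp # u) us)) = length us + sum_list (map length us)"
  by (induction us) auto

lemma ht_concat_Tp: "(\<forall>u\<in>set us. ht u = 0) \<Longrightarrow> ht (concat (map (\<lambda>u. Tp # u) us)) = int (length us)"
  by (induction us) auto

definition Fv :: "('k::ab_group_add \<Rightarrow> 'k) \<Rightarrow> int \<Rightarrow> 'k letter list \<Rightarrow> 'k" where
  "Fv phi h w = sum_list (map (\<lambda>(h', r). phi_pow phi h' r) (rl h w))"

lemma Fv_append: "Fv phi h (xs @ ys) = Fv phi h xs + Fv phi (h + ht xs) ys"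
  by (simp add: Fv_def rl_append)

lemma Fv_concat:
  assumes "\<forall>j. ht (B j) = 0"
  shows "Fv phi h (concat (map (\<lambda>u. Tp # u) (map B [0..<n]))) = (\<Sum>j<n. Fv phi (h + int j + 1) (B j))"
proof (induction n)
  case 0 thus ?case by (simp add: Fv_def)
next
  case (Suc n)
  have ht: "ht (concat (map (\<lambda>u. Tp # u) (map B [0..<n]))) = int n"
    using ht_concat_Tp[of "map B [0..<n]"] assms by auto
  have "Fv phi h (concat (map (\<lambda>u. Tp # u) (map B [0..<Suc n]))) =
        Fv phi h (concat (map (\<lambda>u. Tp # u) (map B [0..<n])) @ Tp # B n)" by simp
  also have "\<dots> = (\<Sum>j<n. Fv phi (h + int j + 1) (B j)) + Fv phi (h + int n + 1) (B n)"
    unfolding Fv_append ht Suc by (simp add: Fv_def ac_simps)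
  finally show ?case by simp
qed

context ctx begin

lemma red_eval: "(w, w') \<in> red_step \<Longrightarrow> eval_word phi w' = eval_word phi w"
proof (erule red_stepE)
  fix u a v assume "w = u @ [a, inv_letter a] @ v" "w' = u @ v"
  moreover have "eval_word phi ([a, inv_letter a] @ v) = eval_word phi v"
    unfolding eval_append eval_pair by simp
  ultimately show ?thesis by (simp add: eval_append)
qed

lemma reds_eval: "(w, w') \<in> red_step\<^sup>* \<Longrightarrow> eval_word phi w' = eval_word phi w"
  by (induction rule: rtrancl_induct) (auto dest: red_eval)

lemma wl_le_red:
  assumes "set w \<subseteq> letters R"
  shows "word_length phi R (eval_word phi w) \<le> red_length w"
proof -
  obtain w' where w': "(w, w') \<in> red_step\<^sup>*" "length w' = red_length w" using red_length_ex by blast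
  have "set w' \<subseteq> letters R" using reds_set[OF w'(1)] assms by blast
  moreover have "eval_word phi w' = eval_word phi w" using reds_eval[OF w'(1)] .
  ultimately show ?thesis unfolding word_length_def using w'(2) by (intro Least_le) blast
qed

lemma snd_eval: "snd (eval_word phi w) = ht w"
  by (induction w rule: ht.induct) (simp_all add: eval_cons gmult_def gone_def)

lemma fst_eval: "phi_pow phi h (fst (eval_word phi w)) = Fv phi h w"
proof (induction w arbitrary: h rule: ht.induct)
  case 1 thus ?case by (simp add: Fv_def gone_def)
next
  case (2 r w) show ?case using 2[of h] by (simp add: Fv_def eval_cons gmult_def pp_add)
next
  case (3 w)
  have "phi_pow phi h (phi_pow phi 1 y) = phi_pow phi (h+1) y" for y by (simp add: pp_comp)
  thus ?case using 3[of "h+1"] by (simp add: Fv_def eval_cons gmult_def)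
next
  case (4 w)
  have "phi_pow phi h (phi_pow phi (-1) y) = phi_pow phi (h-1) y" for y
    using pp_comp[of h "-1" y] by simp
  thus ?case using 4[of "h-1"] by (simp add: Fv_def eval_cons gmult_def)
qed

end


lemma sum_list_ones: "sum_list (map (\<lambda>_. 1::nat) xs) = length xs"
  by (induction xs) auto

context ctx begin

lemma construct:
  assumes wR: "set w0 \<subseteq> letters R" and m: "0 \<le> ht w0"
  shows "\<exists>W. W_form R W \<and> set W \<subseteq> letters R \<and> eval_word phi W = eval_word phi w0 \<and> red_length W \<le> length w0"
proof -
  define hs where "hs = (\<lambda>k. ht (take k w0)) ` {0..length w0}"
  have fin: "finite hs" and ne: "hs \<noteq> {}" unfolding hs_def by auto
  have h0: "0 \<in> hs" unfolding hs_def by (force intro: image_eqI[of _ _ 0])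
  have hm: "ht w0 \<in> hs" unfolding hs_def by (force intro: image_eqI[of _ _ "length w0"])
  define pn where "pn = nat (- Min hs)"
  define Mn where "Mn = nat (Max hs)"
  define mn where "mn = nat (ht w0)"
  have Minle: "Min hs \<le> 0" using Min_le[OF fin h0] .
  have Maxge: "ht w0 \<le> Max hs" "0 \<le> Max hs" using Max_ge[OF fin] h0 hm by auto
  have pe: "Min hs = - int pn" using Minle pn_def by simp
  have Me: "Max hs = int Mn" using Maxge Mn_def by simp
  have me: "ht w0 = int mn" using m mn_def by simp
  have mM: "mn \<le> Mn" using Maxge me Me by simp
  obtain i where i: "i \<le> length w0" "ht (take i w0) = - int pn"
    using Min_in[OF fin ne] pe unfolding hs_def by auto
  obtain j where j: "j \<le> length w0" "ht (take j w0) = int Mn"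
    using Max_in[OF fin ne] Me unfolding hs_def by auto
  have cmb: "int pn + int Mn - int mn \<le> int (cm w0)"
  proof (cases "i \<le> j")
    case True
    have d0: "drop i w0 = take (j - i) (drop i w0) @ drop j w0"
      using True by (metis append_take_drop_id drop_drop le_add_diff_inverse2)
    have d1: "w0 = take i w0 @ take (j - i) (drop i w0) @ drop j w0"
      using d0 by (metis append_take_drop_id)
    have "ht w0 = ht (take j w0) + ht (drop j w0)" by (metis append_take_drop_id ht_append)
    hence "ht (drop j w0) = int mn - int Mn" using j me by simp
    hence a: "int Mn - int mn \<le> int (cm (drop j w0))" using cm_ge[of "drop j w0"] by simp
    have b: "int pn \<le> int (cm (take i w0))" using cm_ge[of "take i w0"] i by simp
    have "cm w0 = cm (take i w0) + cm (take (j - i) (drop i w0)) + cm (drop j w0)"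
      using d1 by (metis cm_append add.assoc)
    thus ?thesis using a b by simp
  next
    case False
    have d1: "take i w0 = take j w0 @ take (i - j) (drop j w0)"
      using False by (metis le_add_diff_inverse nat_le_linear take_add)
    have seg: "ht (take (i - j) (drop j w0)) = - int pn - int Mn"
      using arg_cong[OF d1, of ht] i j by simp
    have "cm w0 = cm (take i w0) + cm (drop i w0)" by (metis append_take_drop_id cm_append)
    moreover have "cm (take i w0) = cm (take j w0) + cm (take (i-j) (drop j w0))"
      using d1 by (metis cm_append)
    ultimately show ?thesis using cm_ge[of "take (i - j) (drop j w0)"] seg by simp
  qed
  define L where "L = rl 0 w0"
  have Lr: "\<forall>x\<in>set L. snd x \<in> R \<and> - int pn \<le> fst x \<and> fst x \<le> int Mn"
  proof
    fix x assume xL: "x \<in> set L"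
    obtain h r where x: "x = (h,r)" by fastforce
    from rl_set[of h r 0 w0] xL x L_def obtain k where
      k: "Gen r \<in> set w0" "k \<le> length w0" "h = ht (take k w0)" by auto
    have "h \<in> hs" unfolding hs_def using k by auto
    hence "Min hs \<le> h" "h \<le> Max hs" using fin by auto
    moreover have "r \<in> R" using k(1) wR unfolding letters_def by auto
    ultimately show "snd x \<in> R \<and> - int pn \<le> fst x \<and> fst x \<le> int Mn" using x pe Me by simp
  qed
  define d where "d = pn + Mn"
  define blk where "blk j = map (Gen \<circ> snd) (filter (\<lambda>x. fst x = int j - int pn) L)" for j
  define us where "us = map (\<lambda>j. blk (Suc j)) [0..<d]"
  define A where "A = replicate pn Tm @ blk 0 @ concat (map (\<lambda>u. Tp # u) us)"
  define W where "W = A @ replicate Mn Tm @ replicate mn Tp"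
  define W1 where "W1 = A @ replicate (Mn - mn) Tm"
  have blkR: "set (blk j) \<subseteq> Gen ` R" for j using Lr unfolding blk_def by auto
  have WF: "W_form R W" unfolding W_form_def
    apply (rule exI[of _ pn], rule exI[of _ Mn], rule exI[of _ mn], rule exI[of _ "blk 0"], rule exI[of _ us])
    using blkR unfolding W_def A_def us_def d_def by auto
  have WR: "set W \<subseteq> letters R"
    using blkR unfolding W_def A_def us_def letters_def by auto
  have htblk: "\<forall>j. ht (blk (Suc j)) = 0" unfolding blk_def by simp
  have htus: "ht (concat (map (\<lambda>u. Tp # u) us)) = int d"
    using ht_concat_Tp[of us] htblk unfolding us_def by simp
  have htW: "ht W = ht w0" unfolding W_def A_def using htus d_def me by (simp add: blk_def)
  define S where "S j = sum_list (map (\<lambda>(h', r). phi_pow phi h' r) (filter (\<lambda>x. fst x = int j - int pn) L))" for j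
  have Fblk: "Fv phi (int j - int pn) (blk j) = S j" for j
    unfolding Fv_def blk_def S_def by (simp only: rl_blk)
  have Fus: "Fv phi (- int pn) (concat (map (\<lambda>u. Tp # u) us)) = (\<Sum>j<d. S (Suc j))"
  proof -
    have e: "- int pn + int j + 1 = int (Suc j) - int pn" for j by simp
    show ?thesis unfolding us_def using Fv_concat[OF htblk, of phi "- int pn" d] Fblk
      by (simp only: e)
  qed
  have Fb0: "Fv phi (- int pn) (blk 0) = S 0" using Fblk[of 0] by simp
  have FW: "Fv phi 0 W = (\<Sum>j<Suc d. S j)"
  proof -
    have "Fv phi 0 W = Fv phi (- int pn) (blk 0) + Fv phi (- int pn) (concat (map (\<lambda>u. Tp # u) us))"
    proof -
      have Frep: "Fv phi h (replicate k Tm) = 0" "Fv phi h (replicate k Tp) = 0" for h k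
        by (simp_all add: Fv_def)
      have hb0: "ht (blk 0) = 0" by (simp add: blk_def)
      show ?thesis unfolding W_def A_def by (simp add: Fv_append Frep hb0)
    qed
    also have "\<dots> = (\<Sum>j<Suc d. S j)" unfolding Fb0 Fus sum.lessThan_Suc_shift ..
    finally show ?thesis .
  qed
  have cond: "\<forall>x\<in>set L. nat (fst x + int pn) < Suc d \<and> (\<forall>j. (fst x = int j - int pn) = (j = nat (fst x + int pn)))"
    using Lr d_def by auto
  have FL: "sum_list (map (\<lambda>(h', r). phi_pow phi h' r) L) = (\<Sum>j<Suc d. S j)"
    unfolding S_def by (rule part_sum[OF cond])
  have evalW: "eval_word phi W = eval_word phi w0"
  proof (rule prod_eqI)
    show "fst (eval_word phi W) = fst (eval_word phi w0)"
      using fst_eval[of 0 W] fst_eval[of 0 w0] FW FL by (simp add: Fv_def L_def)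
    show "snd (eval_word phi W) = snd (eval_word phi w0)"
      using htW by (simp add: snd_eval)
  qed
  have red: "(W, W1) \<in> red_step\<^sup>*"
  proof -
    have "replicate Mn Tm = replicate (Mn - mn) Tm @ replicate mn Tm"
      using mM by (simp add: replicate_add[symmetric])
    hence "W = W1 @ (replicate mn Tm @ replicate mn Tp) @ []" unfolding W_def W1_def by simp
    thus ?thesis using red_ctx[OF cancel, of W1 mn "[]"] by simp
  qed
  have lenb: "length (blk 0) + sum_list (map length us) = length L"
  proof -
    have "sum_list (map length us) = (\<Sum>j<d. length (blk (Suc j)))"
      unfolding us_def by (simp add: sum_list_upt comp_def)
    hence "length (blk 0) + sum_list (map length us) = (\<Sum>j<Suc d. length (blk j))"
      by (simp add: sum.lessThan_Suc_shift del: sum.lessThan_Suc)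
    also have "\<dots> = (\<Sum>j<Suc d. sum_list (map (\<lambda>_. 1::nat) (filter (\<lambda>x. fst x = int j - int pn) L)))"
      unfolding blk_def sum_list_ones by simp
    also have "\<dots> = sum_list (map (\<lambda>_. 1::nat) L)"
      by (rule part_sum[OF cond, symmetric])
    finally show ?thesis unfolding sum_list_ones .
  qed
  have lenW1: "length W1 = pn + d + (Mn - mn) + cg w0"
  proof -
    have "length us = d" by (simp add: us_def)
    thus ?thesis using lenb length_rl[of 0 w0] length_concat_Tp[of us] unfolding W1_def A_def L_def
      by simp
  qed
  have "int (length W1) \<le> int (length w0)"
    using lenW1 length_cnt[of w0] ht_cnt[of w0] me cmb mM d_def by simp
  hence "red_length W \<le> length w0" using red_length_le[OF red] by linarith
  thus ?thesis using WF WR evalW by blast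
qed

end

theorem lemma2p1:
  fixes phi :: "'k::ab_group_add \<Rightarrow> 'k" and R :: "'k set" and x :: 'k and m :: int
  assumes "bij phi"
    and "\<And>a b. phi (a + b) = phi a + phi b"
    and "finite R"
    and "\<And>r. r \<in> R \<Longrightarrow> - r \<in> R"
    and "gen_subgroup phi (letter_val ` letters R) = UNIV"
    and "0 \<le> m"
  shows "\<exists>w \<in> W' phi R. geodesic phi R w \<and> eval_word phi w = (x, m)"
proof -
  interpret ctx phi using assms(1,2) by unfold_locales
  have "(x, m) \<in> gen_subgroup phi (letter_val ` letters R)" using assms(5) by simp
  then obtain w where "set w \<subseteq> letters R" "eval_word phi w = (x, m)"
    using gen_words assms(4) by blast
  hence ex: "\<exists>n w. set w \<subseteq> letters R \<and> length w = n \<and> eval_word phi w = (x, m)" by blast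
  obtain w0 where w0: "set w0 \<subseteq> letters R" "length w0 = word_length phi R (x, m)" "eval_word phi w0 = (x, m)"
    using LeastI_ex[OF ex] unfolding word_length_def by blast
  have "0 \<le> ht w0" using snd_eval[of w0] w0(3) assms(6) by simp
  then obtain W where W: "W_form R W" "set W \<subseteq> letters R" "eval_word phi W = (x, m)"
    "red_length W \<le> length w0"
    using construct[OF w0(1)] w0(3) by auto
  have "word_length phi R (x, m) \<le> red_length W" using wl_le_red[OF W(2)] W(3) by simp
  hence geo: "geodesic phi R W" using W w0 unfolding geodesic_def by simp
  show ?thesis using W geo unfolding W'_def by auto
qed


end
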